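(* Let $G=G_0*_HG_1$ be a nondegenerate free product with amalgamation and suppose that $\ker G$ is trivial. Then $G$ is a weak$^*$ Powers group.
   Context: The amalgam is nondegenerate if $([G_0:H]-1)([G_1:H]-1)\ge2$, and $\ker G=\bigcap_{g\in G}gHg^{-1}$. A group $G$ is a weak$^*$ Powers group if for every $f\in G\setminus\{e\}$ and every integer $k\ge1$ there exist a partition $G=D\sqcup E$ and elements $g_1,\dots,g_k\in G$ with $fD\cap D=\varnothing$ and $g_iE\cap g_jE=\varnothing$ for all distinct $i,j$. *)

theory Defs
  imports "HOL-Algebra.Algebra" "HOL-Library.Extended_Nat"
begin

definition subgroup_index :: "('a, 'b) monoid_scheme \<Rightarrow> 'a set \<Rightarrow> 'a set \<Rightarrow> enat" where
  "subgroup_index G K H =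
     (let C = {a <#\<^bsub>G\<^esub> H | a. a \<in> K} in if finite C then enat (card C) else \<infinity>)"

definition list_prod :: "('a, 'b) monoid_scheme \<Rightarrow> 'a list \<Rightarrow> 'a" where
  "list_prod G ws = foldr (\<lambda>x y. x \<otimes>\<^bsub>G\<^esub> y) ws \<one>\<^bsub>G\<^esub>"

definition reduced_word :: "'a set \<Rightarrow> 'a set \<Rightarrow> 'a set \<Rightarrow> 'a list \<Rightarrow> bool" where
  "reduced_word G0 G1 H ws \<longleftrightarrow>
     (\<forall>i < length ws. ws ! i \<in> (G0 - H) \<union> (G1 - H)) \<and>
     (\<forall>i. Suc i < length ws \<longrightarrow>
        \<not> (ws ! i \<in> G0 \<and> ws ! Suc i \<in> G0) \<and> \<not> (ws ! i \<in> G1 \<and> ws ! Suc i \<in> G1))"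

(* G is the (internal) free product with amalgamation G0 *_H G1:
   G0, G1 subgroups with G0 \<inter> G1 = H, generating G, and every nonempty reduced
   word represents a nontrivial element (normal form theorem). *)
definition amalgamated_product :: "('a, 'b) monoid_scheme \<Rightarrow> 'a set \<Rightarrow> 'a set \<Rightarrow> 'a set \<Rightarrow> bool" where
  "amalgamated_product G G0 G1 H \<longleftrightarrow>
     group G \<and> subgroup G0 G \<and> subgroup G1 G \<and> H = G0 \<inter> G1 \<and>
     generate G (G0 \<union> G1) = carrier G \<and>
     (\<forall>ws. ws \<noteq> [] \<and> reduced_word G0 G1 H ws \<longrightarrow> list_prod G ws \<noteq> \<one>\<^bsub>G\<^esub>)"

definition nondegenerate_amalgam :: "('a, 'b) monoid_scheme \<Rightarrow> 'a set \<Rightarrow> 'a set \<Rightarrow> 'a set \<Rightarrow> bool" where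
  "nondegenerate_amalgam G G0 G1 H \<longleftrightarrow>
     (subgroup_index G G0 H - 1) * (subgroup_index G G1 H - 1) \<ge> 2"

definition amalgam_kernel :: "('a, 'b) monoid_scheme \<Rightarrow> 'a set \<Rightarrow> 'a set" where
  "amalgam_kernel G H = (\<Inter>g \<in> carrier G. (g <#\<^bsub>G\<^esub> H) #>\<^bsub>G\<^esub> inv\<^bsub>G\<^esub> g)"

definition weak_star_powers :: "('a, 'b) monoid_scheme \<Rightarrow> bool" where
  "weak_star_powers G \<longleftrightarrow>
     (\<forall>f \<in> carrier G - {\<one>\<^bsub>G\<^esub>}. \<forall>k::nat. k \<ge> 1 \<longrightarrow>
        (\<exists>D E (g :: nat \<Rightarrow> 'a).
           D \<union> E = carrier G \<and> D \<inter> E = {} \<and>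
           (f <#\<^bsub>G\<^esub> D) \<inter> D = {} \<and>
           (\<forall>i \<in> {1..k}. g i \<in> carrier G) \<and>
           (\<forall>i \<in> {1..k}. \<forall>j \<in> {1..k}. i \<noteq> j \<longrightarrow>
              (g i <#\<^bsub>G\<^esub> E) \<inter> (g j <#\<^bsub>G\<^esub> E) = {})))"

end

theory Submission
  imports Defs
begin

lemma reduced_word_sym: "reduced_word B A H ws = reduced_word A B H ws"
  unfolding reduced_word_def by blast

lemma reduced_Nil[simp]: "reduced_word A B H []"
  unfolding reduced_word_def by simp

lemma reduced_Cons: "reduced_word A B H (w#ws) \<longleftrightarrow>
   w \<in> (A - H) \<union> (B - H) \<and> reduced_word A B H ws \<and>
   (ws \<noteq> [] \<longrightarrow> \<not> (w \<in> A \<and> hd ws \<in> A) \<and> \<not> (w \<in> B \<and> hd ws \<in> B))"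
proof -
  have a: "(\<forall>i<length (w#ws). P ((w#ws)!i)) \<longleftrightarrow> P w \<and> (\<forall>i<length ws. P (ws!i))" for P
    by (auto simp: less_Suc_eq_0_disj)
  have b: "(\<forall>i. Suc i < length (w#ws) \<longrightarrow> Q ((w#ws)!i) ((w#ws)! Suc i)) \<longleftrightarrow>
     (ws \<noteq> [] \<longrightarrow> Q w (hd ws)) \<and> (\<forall>i. Suc i < length ws \<longrightarrow> Q (ws!i) (ws!Suc i))" for Q
  proof
    assume h: "\<forall>i. Suc i < length (w#ws) \<longrightarrow> Q ((w#ws)!i) ((w#ws)! Suc i)"
    show "(ws \<noteq> [] \<longrightarrow> Q w (hd ws)) \<and> (\<forall>i. Suc i < length ws \<longrightarrow> Q (ws!i) (ws!Suc i))"
    proof safe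
      assume "ws \<noteq> []" then show "Q w (hd ws)" using h[rule_format, of 0] by (simp add: hd_conv_nth)
    next
      fix i assume "Suc i < length ws" then show "Q (ws!i) (ws!Suc i)" using h[rule_format, of "Suc i"] by simp
    qed
  next
    assume h: "(ws \<noteq> [] \<longrightarrow> Q w (hd ws)) \<and> (\<forall>i. Suc i < length ws \<longrightarrow> Q (ws!i) (ws!Suc i))"
    show "\<forall>i. Suc i < length (w#ws) \<longrightarrow> Q ((w#ws)!i) ((w#ws)! Suc i)"
    proof (intro allI impI)
      fix i assume i: "Suc i < length (w#ws)"
      show "Q ((w#ws)!i) ((w#ws)! Suc i)"
      proof (cases i)
        case 0 then show ?thesis using h i by (auto simp: hd_conv_nth)
      next
        case (Suc j) then show ?thesis using h i by auto
      qed
    qed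
  qed
  show ?thesis unfolding reduced_word_def
    using a[of "\<lambda>x. x \<in> (A - H) \<union> (B - H)"]
      b[of "\<lambda>x y. \<not> (x \<in> A \<and> y \<in> A) \<and> \<not> (x \<in> B \<and> y \<in> B)"] by blast
qed

lemma reduced_append: "reduced_word A B H (ws @ vs) \<longleftrightarrow>
   reduced_word A B H ws \<and> reduced_word A B H vs \<and>
   (ws \<noteq> [] \<and> vs \<noteq> [] \<longrightarrow> \<not> (last ws \<in> A \<and> hd vs \<in> A) \<and> \<not> (last ws \<in> B \<and> hd vs \<in> B))"
  by (induction ws) (auto simp: reduced_Cons)

lemma list_prod_Nil[simp]: "list_prod G [] = \<one>\<^bsub>G\<^esub>"
  by (simp add: list_prod_def)
lemma list_prod_Cons[simp]: "list_prod G (w#ws) = w \<otimes>\<^bsub>G\<^esub> list_prod G ws"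
  by (simp add: list_prod_def)



definition Lw :: "('a, 'b) monoid_scheme \<Rightarrow> 'a set \<Rightarrow> 'a set \<Rightarrow> 'a set \<Rightarrow> 'a set" where
  "Lw G A B H = {list_prod G ws | ws. ws \<noteq> [] \<and> reduced_word A B H ws \<and> hd ws \<in> A}"

lemma amalg_sym: "amalgamated_product G G0 G1 H \<Longrightarrow> amalgamated_product G G1 G0 H"
  unfolding amalgamated_product_def by (auto simp: reduced_word_sym Un_commute Int_commute)

locale amalg = group G for G (structure) +
  fixes G0 G1 H
  assumes AP: "amalgamated_product G G0 G1 H"
begin

abbreviation "L0 \<equiv> Lw G G0 G1 H"
abbreviation "L1 \<equiv> Lw G G1 G0 H"
abbreviation "R \<equiv> reduced_word G0 G1 H"

lemma sg0: "subgroup G0 G" and sg1: "subgroup G1 G" and Hdef: "H = G0 \<inter> G1"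
  and gen: "generate G (G0 \<union> G1) = carrier G"
  and nontriv: "ws \<noteq> [] \<Longrightarrow> R ws \<Longrightarrow> list_prod G ws \<noteq> \<one>"
  using AP unfolding amalgamated_product_def by auto

lemma sgH: "subgroup H G"
  using Hdef sg0 sg1 subgroups_Inter_pair by auto

lemma G0c: "G0 \<subseteq> carrier G" and G1c: "G1 \<subseteq> carrier G" and Hc: "H \<subseteq> carrier G"
  using sg0 sg1 sgH by (auto dest: subgroup.subset)

lemma sub_lmul:
  assumes K: "subgroup K G" and h: "h \<in> K" and x: "x \<in> carrier G"
  shows "h \<otimes> x \<in> K \<longleftrightarrow> x \<in> K"
proof
  assume hx: "h \<otimes> x \<in> K"
  have hc: "h \<in> carrier G" using subgroup.mem_carrier[OF K h] .
  have "inv h \<otimes> (h \<otimes> x) = x" using hc x by (simp flip: m_assoc)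
  moreover have "inv h \<otimes> (h \<otimes> x) \<in> K"
    using subgroup.m_closed[OF K subgroup.m_inv_closed[OF K h] hx] .
  ultimately show "x \<in> K" by simp
next
  assume "x \<in> K" then show "h \<otimes> x \<in> K" using subgroup.m_closed[OF K h] by simp
qed

lemma sub_rmul:
  assumes K: "subgroup K G" and h: "h \<in> K" and x: "x \<in> carrier G"
  shows "x \<otimes> h \<in> K \<longleftrightarrow> x \<in> K"
proof
  assume hx: "x \<otimes> h \<in> K"
  have hc: "h \<in> carrier G" using subgroup.mem_carrier[OF K h] .
  have "(x \<otimes> h) \<otimes> inv h = x" using hc x by (simp add: m_assoc)
  moreover have "(x \<otimes> h) \<otimes> inv h \<in> K"
    using subgroup.m_closed[OF K hx subgroup.m_inv_closed[OF K h]] .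
  ultimately show "x \<in> K" by simp
next
  assume "x \<in> K" then show "x \<otimes> h \<in> K" using subgroup.m_closed[OF K _ h] by simp
qed

lemma sub_inv: "subgroup K G \<Longrightarrow> x \<in> carrier G \<Longrightarrow> (inv x \<in> K \<longleftrightarrow> x \<in> K)"
  using subgroup.m_inv_closed[of K G "inv x"] subgroup.m_inv_closed[of K G x] by auto

lemma letters: "R ws \<Longrightarrow> set ws \<subseteq> (G0 - H) \<union> (G1 - H)"
  unfolding reduced_word_def by (auto simp: in_set_conv_nth)

lemma letters_c: "R ws \<Longrightarrow> set ws \<subseteq> carrier G"
  using letters G0c G1c by blast

lemma list_prod_c: "set ws \<subseteq> carrier G \<Longrightarrow> list_prod G ws \<in> carrier G"
  by (induction ws) auto

lemma list_prod_append: "set ws \<subseteq> carrier G \<Longrightarrow> set vs \<subseteq> carrier G \<Longrightarrow>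
    list_prod G (ws @ vs) = list_prod G ws \<otimes> list_prod G vs"
  by (induction ws) (auto simp: m_assoc list_prod_c)

lemma hd_facts: "R ws \<Longrightarrow> ws \<noteq> [] \<Longrightarrow> hd ws \<in> G0 \<Longrightarrow> hd ws \<notin> G1 \<and> hd ws \<notin> H"
  using letters[of ws] Hdef hd_in_set by blast
lemma hd_facts1: "R ws \<Longrightarrow> ws \<noteq> [] \<Longrightarrow> hd ws \<in> G1 \<Longrightarrow> hd ws \<notin> G0 \<and> hd ws \<notin> H"
  using letters[of ws] Hdef hd_in_set by blast
lemma last_facts: "R ws \<Longrightarrow> ws \<noteq> [] \<Longrightarrow> last ws \<in> G0 \<Longrightarrow> last ws \<notin> G1 \<and> last ws \<notin> H"
  using letters[of ws] Hdef last_in_set by blast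
lemma last_facts1: "R ws \<Longrightarrow> ws \<noteq> [] \<Longrightarrow> last ws \<in> G1 \<Longrightarrow> last ws \<notin> G0 \<and> last ws \<notin> H"
  using letters[of ws] Hdef last_in_set by blast
lemma hd_either: "R ws \<Longrightarrow> ws \<noteq> [] \<Longrightarrow> hd ws \<in> G0 \<or> hd ws \<in> G1"
  using letters[of ws] hd_in_set by blast
lemma last_either: "R ws \<Longrightarrow> ws \<noteq> [] \<Longrightarrow> last ws \<in> G0 \<or> last ws \<in> G1"
  using letters[of ws] last_in_set by blast

lemma L0c: "L0 \<subseteq> carrier G" and L1c: "L1 \<subseteq> carrier G"
  unfolding Lw_def using list_prod_c letters_c by (auto simp: reduced_word_sym)

definition invw :: "'a list \<Rightarrow> 'a list" where "invw ws = rev (map (\<lambda>x. inv x) ws)"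

lemma invw_prod: "set ws \<subseteq> carrier G \<Longrightarrow> list_prod G (invw ws) = inv (list_prod G ws)"
proof (induction ws)
  case (Cons a ws)
  have s: "set (invw ws) \<subseteq> carrier G" using Cons.prems by (auto simp: invw_def)
  have "list_prod G (invw (a # ws)) = list_prod G (invw ws @ [inv a])" by (simp add: invw_def)
  also have "\<dots> = list_prod G (invw ws) \<otimes> inv a"
    using Cons.prems s by (simp add: list_prod_append)
  also have "\<dots> = inv (list_prod G ws) \<otimes> inv a" using Cons by simp
  also have "\<dots> = inv (a \<otimes> list_prod G ws)" using Cons.prems list_prod_c[of ws]
    by (simp add: inv_mult_group)
  finally show ?case by simp
qed (simp add: invw_def)

lemma inv_G0: "x \<in> carrier G \<Longrightarrow> inv x \<in> G0 \<longleftrightarrow> x \<in> G0"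
  using sub_inv sg0 by blast
lemma inv_G1: "x \<in> carrier G \<Longrightarrow> inv x \<in> G1 \<longleftrightarrow> x \<in> G1"
  using sub_inv sg1 by blast
lemma inv_H: "x \<in> carrier G \<Longrightarrow> inv x \<in> H \<longleftrightarrow> x \<in> H"
  using sub_inv sgH by blast

lemma invw_red: "R ws \<Longrightarrow> R (invw ws)"
proof (induction ws)
  case Nil then show ?case by (simp add: invw_def)
next
  case (Cons w ws)
  have wc: "w \<in> carrier G" using letters_c[OF Cons.prems] by auto
  have r: "R ws" and w: "w \<in> (G0 - H) \<union> (G1 - H)"
    and adj: "ws \<noteq> [] \<longrightarrow> \<not> (w \<in> G0 \<and> hd ws \<in> G0) \<and> \<not> (w \<in> G1 \<and> hd ws \<in> G1)"
    using Cons.prems by (auto simp: reduced_Cons)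
  have "invw (w # ws) = invw ws @ [inv w]" by (simp add: invw_def)
  moreover have "R [inv w]" using w wc inv_G0 inv_G1 inv_H by (auto simp: reduced_Cons)
  moreover have "ws \<noteq> [] \<Longrightarrow> last (invw ws) = inv (hd ws)"
    by (simp add: invw_def last_rev last_map hd_map)
  moreover have "ws \<noteq> [] \<Longrightarrow> hd ws \<in> carrier G" using r letters_c hd_in_set by blast
  ultimately show ?case using Cons.IH[OF r] adj wc inv_G0 inv_G1
    by (auto simp: reduced_append invw_def)
qed

lemma invw_hd_last: "ws \<noteq> [] \<Longrightarrow> last (invw ws) = inv (hd ws) \<and> hd (invw ws) = inv (last ws) \<and> invw ws \<noteq> []"
  by (simp add: invw_def last_rev last_map hd_map hd_rev)


lemma mem_L0: "y \<in> L0 \<longleftrightarrow> (\<exists>ws. y = list_prod G ws \<and> ws \<noteq> [] \<and> R ws \<and> hd ws \<in> G0)"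
  unfolding Lw_def by auto
lemma mem_L1: "y \<in> L1 \<longleftrightarrow> (\<exists>ws. y = list_prod G ws \<and> ws \<noteq> [] \<and> R ws \<and> hd ws \<in> G1)"
  unfolding Lw_def by (auto simp: reduced_word_sym)

lemma HsubG0: "H \<subseteq> G0" and HsubG1: "H \<subseteq> G1" using Hdef by auto

lemma absorb:
  assumes h: "h \<in> H" and ne: "ws \<noteq> []" and r: "R ws"
  shows "R ((h \<otimes> hd ws) # tl ws) \<and> (h \<otimes> hd ws \<in> G0 \<longleftrightarrow> hd ws \<in> G0)
     \<and> (h \<otimes> hd ws \<in> G1 \<longleftrightarrow> hd ws \<in> G1)
     \<and> list_prod G ((h \<otimes> hd ws) # tl ws) = h \<otimes> list_prod G ws"
proof -
  obtain w vs where ws: "ws = w # vs" using ne by (cases ws) auto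
  have wc: "w \<in> carrier G" using letters_c[OF r] ws by auto
  have hc: "h \<in> carrier G" using h Hc by auto
  have vc: "set vs \<subseteq> carrier G" using letters_c[OF r] ws by auto
  have e0: "h \<otimes> w \<in> G0 \<longleftrightarrow> w \<in> G0" using sub_lmul[OF sg0 _ wc] h HsubG0 by auto
  have e1: "h \<otimes> w \<in> G1 \<longleftrightarrow> w \<in> G1" using sub_lmul[OF sg1 _ wc] h HsubG1 by auto
  have eH: "h \<otimes> w \<in> H \<longleftrightarrow> w \<in> H" using sub_lmul[OF sgH h wc] .
  have "R ((h \<otimes> w) # vs)" using r e0 e1 eH unfolding ws reduced_Cons by blast
  then show ?thesis using ws e0 e1 wc hc vc list_prod_c[OF vc] by (simp add: m_assoc)
qed

lemma absorb_L0: "h \<in> H \<Longrightarrow> y \<in> L0 \<Longrightarrow> h \<otimes> y \<in> L0"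
  unfolding mem_L0 by (metis absorb list.sel(1) list.distinct(1))
lemma absorb_L1: "h \<in> H \<Longrightarrow> y \<in> L1 \<Longrightarrow> h \<otimes> y \<in> L1"
  unfolding mem_L1 by (metis absorb list.sel(1) list.distinct(1))

lemma H_not_L: assumes "x \<in> H" "ws \<noteq> []" "R ws" "x = list_prod G ws" shows False
proof -
  have xc: "x \<in> carrier G" using assms Hc by auto
  have "inv x \<in> H" using subgroup.m_inv_closed[OF sgH assms(1)] .
  from absorb[OF this assms(2,3)] have "R ((inv x \<otimes> hd ws) # tl ws)"
     "list_prod G ((inv x \<otimes> hd ws) # tl ws) = \<one>" using assms(4) xc by auto
  then show False using nontriv by blast
qed

lemma H_L0: "x \<in> H \<Longrightarrow> x \<notin> L0" and H_L1: "x \<in> H \<Longrightarrow> x \<notin> L1"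
  unfolding mem_L0 mem_L1 using H_not_L by blast+

lemma L0_L1: assumes "x \<in> L0" "x \<in> L1" shows False
proof -
  obtain ws where ws: "x = list_prod G ws" "ws \<noteq> []" "R ws" "hd ws \<in> G0" using assms(1) mem_L0 by auto
  obtain vs where vs: "x = list_prod G vs" "vs \<noteq> []" "R vs" "hd vs \<in> G1" using assms(2) mem_L1 by auto
  have hvc: "hd vs \<in> carrier G" using vs letters_c hd_in_set by blast
  have l: "last (invw vs) = inv (hd vs)" "invw vs \<noteq> []" using invw_hd_last[OF vs(2)] by auto
  have "inv (hd vs) \<notin> G0" using hd_facts1[OF vs(3,2,4)] inv_G0[OF hvc] by simp
  moreover have "hd ws \<notin> G1" using hd_facts[OF ws(3,2,4)] by simp
  ultimately have r: "R (invw vs @ ws)" using invw_red[OF vs(3)] ws(3) l by (simp add: reduced_append)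
  have "list_prod G (invw vs @ ws) = inv x \<otimes> x"
    using vs ws letters_c[OF vs(3)] letters_c[OF ws(3)] invw_prod[of vs] list_prod_append[of "invw vs" ws]
      letters_c[OF invw_red[OF vs(3)]] by simp
  also have "\<dots> = \<one>" using L0c assms(1) by auto
  finally show False using nontriv r l by simp
qed

lemma prepend0: assumes x: "x \<in> G0" "x \<notin> H" and y: "y \<in> H \<or> y \<in> L1" shows "x \<otimes> y \<in> L0"
proof -
  have xc: "x \<in> carrier G" using x G0c by auto
  from y show ?thesis
  proof
    assume yH: "y \<in> H"
    have yc: "y \<in> carrier G" using yH Hc by auto
    have "x \<otimes> y \<in> G0" using subgroup.m_closed[OF sg0 x(1)] yH HsubG0 by blast
    moreover have "x \<otimes> y \<notin> H" using sub_rmul[OF sgH yH xc] x by simp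
    ultimately have "R [x \<otimes> y]" by (simp add: reduced_Cons)
    then show ?thesis unfolding mem_L0 using \<open>x \<otimes> y \<in> G0\<close> yc xc
      by (intro exI[of _ "[x \<otimes> y]"]) simp
  next
    assume "y \<in> L1"
    then obtain vs where vs: "y = list_prod G vs" "vs \<noteq> []" "R vs" "hd vs \<in> G1" using mem_L1 by auto
    have "R (x # vs)" using vs x hd_facts1[OF vs(3,2,4)] Hdef by (simp add: reduced_Cons)
    then show ?thesis unfolding mem_L0 using vs x by (intro exI[of _ "x # vs"]) simp
  qed
qed

lemma prepend1: assumes x: "x \<in> G1" "x \<notin> H" and y: "y \<in> H \<or> y \<in> L0" shows "x \<otimes> y \<in> L1"
proof -
  have xc: "x \<in> carrier G" using x G1c by auto
  from y show ?thesis
  proof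
    assume yH: "y \<in> H"
    have yc: "y \<in> carrier G" using yH Hc by auto
    have "x \<otimes> y \<in> G1" using subgroup.m_closed[OF sg1 x(1)] yH HsubG1 by blast
    moreover have "x \<otimes> y \<notin> H" using sub_rmul[OF sgH yH xc] x by simp
    ultimately have "R [x \<otimes> y]" by (simp add: reduced_Cons)
    then show ?thesis unfolding mem_L1 using \<open>x \<otimes> y \<in> G1\<close> yc xc
      by (intro exI[of _ "[x \<otimes> y]"]) simp
  next
    assume "y \<in> L0"
    then obtain vs where vs: "y = list_prod G vs" "vs \<noteq> []" "R vs" "hd vs \<in> G0" using mem_L0 by auto
    have "R (x # vs)" using vs x hd_facts[OF vs(3,2,4)] Hdef by (simp add: reduced_Cons)
    then show ?thesis unfolding mem_L1 using vs x by (intro exI[of _ "x # vs"]) simp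
  qed
qed

end


context amalg begin

lemma lmul_N0:
  assumes x: "x \<in> G0" and y: "y \<in> H \<union> L0 \<union> L1"
  shows "x \<otimes> y \<in> H \<union> L0 \<union> L1"
proof (cases "x \<in> H")
  case True
  then show ?thesis using y absorb_L0 absorb_L1 subgroup.m_closed[OF sgH True] by blast
next
  case xH: False
  have xc: "x \<in> carrier G" using x G0c by auto
  show ?thesis
  proof (cases "y \<in> L0")
    case False
    then show ?thesis using prepend0[OF x xH] y by blast
  next
    case True
    then obtain vs where vs: "y = list_prod G vs" "vs \<noteq> []" "R vs" "hd vs \<in> G0" using mem_L0 by auto
    obtain v vs' where vv: "vs = v # vs'" using vs(2) by (cases vs) auto
    have rv: "R vs'" and vG: "v \<in> G0" and adj: "vs' \<noteq> [] \<Longrightarrow> hd vs' \<notin> G0"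
      using vs(3,4) unfolding vv reduced_Cons by auto
    have vc: "v \<in> carrier G" using vG G0c by auto
    have vsc: "set vs' \<subseteq> carrier G" using letters_c[OF rv] .
    have xv0: "x \<otimes> v \<in> G0" using subgroup.m_closed[OF sg0 x vG] .
    have yeq: "x \<otimes> y = (x \<otimes> v) \<otimes> list_prod G vs'"
      using vs(1) vv xc vc list_prod_c[OF vsc] by (simp add: m_assoc)
    show ?thesis
    proof (cases "x \<otimes> v \<in> H")
      case False
      have "x \<otimes> v \<notin> G1" using False xv0 Hdef by auto
      then have "R ((x \<otimes> v) # vs')" using False xv0 rv adj by (simp add: reduced_Cons)
      then have "x \<otimes> y \<in> L0" unfolding mem_L0 using yeq xv0
        by (intro exI[of _ "(x \<otimes> v) # vs'"]) simp
      then show ?thesis by blast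
    next
      case True
      show ?thesis
      proof (cases "vs' = []")
        case True
        then show ?thesis using yeq \<open>x \<otimes> v \<in> H\<close> xc vc by simp
      next
        case False
        have "hd vs' \<in> G1" using hd_either[OF rv False] adj[OF False] by auto
        then have "list_prod G vs' \<in> L1" unfolding mem_L1 using rv False by blast
        then show ?thesis using absorb_L1[OF True] yeq by simp
      qed
    qed
  qed
qed

lemma swap: "amalg G G1 G0 H"
  by (rule amalg.intro[OF is_group]) (unfold_locales, rule amalg_sym[OF AP])

lemma lmul_N1:
  assumes x: "x \<in> G1" and y: "y \<in> H \<union> L0 \<union> L1"
  shows "x \<otimes> y \<in> H \<union> L0 \<union> L1"
proof -
  interpret sw: amalg G G1 G0 H by (rule swap)
  show ?thesis using sw.lmul_N0[OF x] y by blast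
qed

lemma Nc: "H \<union> L0 \<union> L1 \<subseteq> carrier G" using Hc L0c L1c by auto

lemma cover: assumes g: "g \<in> carrier G" shows "g \<in> H \<union> L0 \<union> L1"
proof -
  have "\<forall>y \<in> H \<union> L0 \<union> L1. g \<otimes> y \<in> H \<union> L0 \<union> L1" if "g \<in> generate G (G0 \<union> G1)" for g
    using that
  proof (induction g rule: generate.induct)
    case one
    then show ?case using Nc by auto
  next
    case (incl h)
    then show ?case using lmul_N0 lmul_N1 by blast
  next
    case (inv h)
    have "h \<in> carrier G" using inv G0c G1c by auto
    then have "inv h \<in> G0 \<or> inv h \<in> G1" using inv inv_G0 inv_G1 by auto
    then show ?case using lmul_N0 lmul_N1 by blast
  next
    case (eng h1 h2)
    have c: "h1 \<in> carrier G" "h2 \<in> carrier G"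
      using eng.hyps generate_in_carrier[of "G0 \<union> G1"] G0c G1c by auto
    show ?case
    proof
      fix y assume y: "y \<in> H \<union> L0 \<union> L1"
      have "y \<in> carrier G" using y Nc by auto
      then have "h1 \<otimes> h2 \<otimes> y = h1 \<otimes> (h2 \<otimes> y)" using c by (simp add: m_assoc)
      then show "h1 \<otimes> h2 \<otimes> y \<in> H \<union> L0 \<union> L1" using eng.IH y by auto
    qed
  qed
  moreover have "\<one> \<in> H" using subgroup.one_closed[OF sgH] .
  ultimately show ?thesis using g gen by force
qed

lemma app_L0:
  assumes r: "R ws" and ne: "ws \<noteq> []" and l: "last ws \<in> G1" and z: "z \<in> L0"
  shows "\<exists>us. list_prod G ws \<otimes> z = list_prod G us \<and> us \<noteq> [] \<and> R us \<and> hd us = hd ws"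
proof -
  obtain vs where vs: "z = list_prod G vs" "vs \<noteq> []" "R vs" "hd vs \<in> G0" using z mem_L0 by auto
  have "R (ws @ vs)" using r vs ne last_facts1[OF r ne l] hd_facts[OF vs(3,2,4)]
    by (simp add: reduced_append)
  moreover have "list_prod G (ws @ vs) = list_prod G ws \<otimes> z"
    using list_prod_append letters_c r vs by simp
  ultimately show ?thesis using ne by (intro exI[of _ "ws @ vs"]) simp
qed

lemma app_L1:
  assumes r: "R ws" and ne: "ws \<noteq> []" and l: "last ws \<in> G0" and z: "z \<in> L1"
  shows "\<exists>us. list_prod G ws \<otimes> z = list_prod G us \<and> us \<noteq> [] \<and> R us \<and> hd us = hd ws"
proof -
  interpret sw: amalg G G1 G0 H by (rule swap)
  show ?thesis using sw.app_L0[of ws z] r ne l z by (simp add: reduced_word_sym)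
qed

lemma tl_word:
  assumes r: "R ws" and ne: "ws \<noteq> []" and h: "hd ws \<in> G0" and l: "last ws \<in> G1"
  shows "tl ws \<noteq> [] \<and> R (tl ws) \<and> hd (tl ws) \<in> G1 \<and> last (tl ws) = last ws"
proof -
  obtain w vs where ws: "ws = w # vs" using ne by (cases ws) auto
  have vne: "vs \<noteq> []" using ws h last_facts1[OF r ne l] by auto
  have rv: "R vs" and adj: "hd vs \<notin> G0" using r vne h unfolding ws reduced_Cons by auto
  show ?thesis using ws vne rv adj hd_either[OF rv vne] by auto
qed

lemma butlast_word:
  assumes r: "R ws" and ne: "ws \<noteq> []" and h: "hd ws \<in> G0" and l: "last ws \<in> G1"
  shows "\<exists>us. ws = us @ [last ws] \<and> us \<noteq> [] \<and> R us \<and> hd us = hd ws \<and> last us \<in> G0"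
proof -
  define us where "us = butlast ws"
  have ws: "ws = us @ [last ws]" using ne us_def by simp
  have une: "us \<noteq> []" proof
    assume "us = []" then have "hd ws = last ws" using ws by (metis append_Nil list.sel(1))
    then show False using h last_facts1[OF r ne l] by simp
  qed
  have "R (us @ [last ws])" using r ws by simp
  then have ru: "R us" and adj: "last us \<notin> G1" using une l by (auto simp: reduced_append)
  have "last us \<in> G0" using last_either[OF ru une] adj by auto
  moreover have "hd us = hd ws" using ws une by (metis hd_append)
  ultimately show ?thesis using ws une ru by blast
qed

end


lemma lcoset_mem: "x \<in> a <#\<^bsub>G\<^esub> S \<longleftrightarrow> (\<exists>s\<in>S. x = a \<otimes>\<^bsub>G\<^esub> s)"
  unfolding l_coset_def by auto

context amalg begin

lemma inv_cancel[simp]: "x \<in> carrier G \<Longrightarrow> y \<in> carrier G \<Longrightarrow> inv x \<otimes> (x \<otimes> y) = y"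
  by (simp flip: m_assoc)

lemma pow_ba_L1: assumes a: "a \<in> G0" "a \<notin> H" and b: "b \<in> G1" "b \<notin> H" and y: "y \<in> L1"
  shows "(b \<otimes> a) [^] (n::nat) \<otimes> y \<in> L1"
proof (induction n)
  case 0 then show ?case using y L1c by auto
next
  case (Suc n)
  have ac: "a \<in> carrier G" "b \<in> carrier G" using a b G0c G1c by auto
  have yc: "(b \<otimes> a) [^] n \<otimes> y \<in> carrier G" using Suc L1c by auto
  have yc: "y \<in> carrier G" using y L1c by auto
  have p: "(b \<otimes> a) [^] Suc n = b \<otimes> (a \<otimes> (b \<otimes> a) [^] n)"
    using ac nat_pow_Suc2[of "b \<otimes> a" n] by (simp add: m_assoc del: nat_pow_Suc)
  have "(b \<otimes> a) [^] Suc n \<otimes> y = b \<otimes> (a \<otimes> ((b \<otimes> a) [^] n \<otimes> y))"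
    unfolding p using ac yc by (simp add: m_assoc del: nat_pow_Suc)
  moreover have "a \<otimes> ((b \<otimes> a) [^] n \<otimes> y) \<in> L0" using prepend0[OF a] Suc by blast
  ultimately show ?case using prepend1[OF b] by auto
qed

lemma translates_gen:
  assumes a: "a \<in> G0" "a \<notin> H" and b: "b \<in> G1" "b \<notin> H" and c: "c \<in> carrier G"
    and cL: "\<And>v. v \<in> L0 \<Longrightarrow> c \<otimes> v \<in> L1"
    and cQ: "\<And>u w. u \<in> L0 \<Longrightarrow> w \<in> L1 \<Longrightarrow> c \<otimes> u \<noteq> b \<otimes> (a \<otimes> w)"
  shows "\<exists>g. (\<forall>i::nat. g i \<in> carrier G) \<and> (\<forall>i j. i \<noteq> j \<longrightarrow> (g i <# L0) \<inter> (g j <# L0) = {})"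
proof -
  have ac: "a \<in> carrier G" "b \<in> carrier G" using a b G0c G1c by auto
  define g where "g i = (b \<otimes> a) [^] (i::nat) \<otimes> c" for i
  have gc: "g i \<in> carrier G" for i using ac c g_def by auto
  have lt: "(g i <# L0) \<inter> (g j <# L0) = {}" if ij: "i < j" for i j
  proof (rule ccontr)
    assume "(g i <# L0) \<inter> (g j <# L0) \<noteq> {}"
    then obtain x where "x \<in> g i <# L0" "x \<in> g j <# L0" by blast
    then obtain u v where u: "u \<in> L0" and v: "v \<in> L0" and e: "g i \<otimes> u = g j \<otimes> v"
      unfolding lcoset_mem by blast
    obtain n where j: "j = i + Suc n" using ij less_iff_Suc_add by auto
    have uc: "u \<in> carrier G" "v \<in> carrier G" using u v L0c by auto
    define w where "w = (b \<otimes> a) [^] n \<otimes> (c \<otimes> v)"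
    have wL: "w \<in> L1" unfolding w_def using pow_ba_L1[OF a b cL[OF v]] .
    have wc: "w \<in> carrier G" using wL L1c by auto
    have p: "(b \<otimes> a) [^] Suc n = b \<otimes> (a \<otimes> (b \<otimes> a) [^] n)"
      using ac nat_pow_Suc2[of "b \<otimes> a" n] by (simp add: m_assoc del: nat_pow_Suc)
    have p2: "(b \<otimes> a) [^] j = (b \<otimes> a) [^] i \<otimes> (b \<otimes> (a \<otimes> (b \<otimes> a) [^] n))"
    proof -
      have m: "(b \<otimes> a) [^] i \<otimes> (b \<otimes> a) [^] Suc n = (b \<otimes> a) [^] j"
        unfolding j by (rule nat_pow_mult) (use ac in simp)
      show ?thesis using m p by metis
    qed
    have "g j \<otimes> v = (b \<otimes> a) [^] i \<otimes> (b \<otimes> (a \<otimes> w))"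
      unfolding g_def w_def p2 using ac c uc by (simp add: m_assoc del: nat_pow_Suc)
    moreover have "g i \<otimes> u = (b \<otimes> a) [^] i \<otimes> (c \<otimes> u)"
      unfolding g_def using ac c uc by (simp add: m_assoc)
    ultimately have "c \<otimes> u = b \<otimes> (a \<otimes> w)" using e ac c uc wc by simp
    then show False using cQ[OF u wL] by simp
  qed
  have "\<forall>i j. i \<noteq> j \<longrightarrow> (g i <# L0) \<inter> (g j <# L0) = {}"
  proof (intro allI impI)
    fix i j :: nat assume "i \<noteq> j"
    then show "(g i <# L0) \<inter> (g j <# L0) = {}" using lt[of i j] lt[of j i] by (metis Int_commute linorder_neqE_nat)
  qed
  then show ?thesis using gc by (intro exI[of _ g]) simp
qed

lemma translates_L0:
  assumes a: "a \<in> G0" "a \<notin> H" and b: "b \<in> G1" "b \<notin> H"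
    and three: "(\<exists>b'\<in>G1. b' \<notin> H \<and> inv b \<otimes> b' \<notin> H) \<or> (\<exists>a'\<in>G0. a' \<notin> H \<and> inv a \<otimes> a' \<notin> H)"
  shows "\<exists>g. (\<forall>i::nat. g i \<in> carrier G) \<and> (\<forall>i j. i \<noteq> j \<longrightarrow> (g i <# L0) \<inter> (g j <# L0) = {})"
proof -
  have ac: "a \<in> carrier G" "b \<in> carrier G" using a b G0c G1c by auto
  from three show ?thesis
  proof
    assume "\<exists>b'\<in>G1. b' \<notin> H \<and> inv b \<otimes> b' \<notin> H"
    then obtain b' where b': "b' \<in> G1" "b' \<notin> H" "inv b \<otimes> b' \<notin> H" by auto
    have b'c: "b' \<in> carrier G" using b' G1c by auto
    show ?thesis
    proof (rule translates_gen[OF a b b'c])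
      show "b' \<otimes> v \<in> L1" if "v \<in> L0" for v using prepend1[OF b'(1,2)] that by blast
      show "b' \<otimes> u \<noteq> b \<otimes> (a \<otimes> w)" if u: "u \<in> L0" and w: "w \<in> L1" for u w
      proof
        assume e: "b' \<otimes> u = b \<otimes> (a \<otimes> w)"
        have c: "u \<in> carrier G" "w \<in> carrier G" using u w L0c L1c by auto
        have "inv b \<otimes> b' \<in> G1" using subgroup.m_closed[OF sg1 subgroup.m_inv_closed[OF sg1 b(1)] b'(1)] .
        then have "(inv b \<otimes> b') \<otimes> u \<in> L1" using prepend1 b'(3) u by blast
        moreover have "(inv b \<otimes> b') \<otimes> u = a \<otimes> w"
          using e ac b'c c by (simp add: m_assoc)
        moreover have "a \<otimes> w \<in> L0" using prepend0[OF a] w by blast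
        ultimately show False using L0_L1 by auto
      qed
    qed
  next
    assume "\<exists>a'\<in>G0. a' \<notin> H \<and> inv a \<otimes> a' \<notin> H"
    then obtain a' where a': "a' \<in> G0" "a' \<notin> H" "inv a \<otimes> a' \<notin> H" by auto
    have a'c: "a' \<in> carrier G" using a' G0c by auto
    have cc: "b \<otimes> (a' \<otimes> b) \<in> carrier G" using ac a'c by auto
    show ?thesis
    proof (rule translates_gen[OF a b cc])
      show "b \<otimes> (a' \<otimes> b) \<otimes> v \<in> L1" if v: "v \<in> L0" for v
      proof -
        have "b \<otimes> (a' \<otimes> b) \<otimes> v = b \<otimes> (a' \<otimes> (b \<otimes> v))" using ac a'c v L0c by (auto simp: m_assoc)
        moreover have "b \<otimes> v \<in> L1" using prepend1[OF b] v by blast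
        ultimately show ?thesis using prepend0[OF a'(1,2)] prepend1[OF b] by auto
      qed
      show "b \<otimes> (a' \<otimes> b) \<otimes> u \<noteq> b \<otimes> (a \<otimes> w)" if u: "u \<in> L0" and w: "w \<in> L1" for u w
      proof
        assume e: "b \<otimes> (a' \<otimes> b) \<otimes> u = b \<otimes> (a \<otimes> w)"
        have c: "u \<in> carrier G" "w \<in> carrier G" using u w L0c L1c by auto
        have "a' \<otimes> (b \<otimes> u) = a \<otimes> w" using e ac a'c c by (simp add: m_assoc)
        then have e2: "(inv a \<otimes> a') \<otimes> (b \<otimes> u) = w" using ac a'c c by (simp add: m_assoc)
        have "inv a \<otimes> a' \<in> G0" using subgroup.m_closed[OF sg0 subgroup.m_inv_closed[OF sg0 a(1)] a'(1)] .
        moreover have "b \<otimes> u \<in> L1" using prepend1[OF b] u by blast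
        ultimately have "(inv a \<otimes> a') \<otimes> (b \<otimes> u) \<in> L0" using prepend0 a'(3) by blast
        then show False using e2 w L0_L1 by auto
      qed
    qed
  qed
qed

end


definition WS :: "('a, 'b) monoid_scheme \<Rightarrow> 'a \<Rightarrow> nat \<Rightarrow> bool" where
  "WS G f k \<longleftrightarrow> (\<exists>D E (g :: nat \<Rightarrow> 'a).
           D \<union> E = carrier G \<and> D \<inter> E = {} \<and>
           (f <#\<^bsub>G\<^esub> D) \<inter> D = {} \<and>
           (\<forall>i \<in> {1..k}. g i \<in> carrier G) \<and>
           (\<forall>i \<in> {1..k}. \<forall>j \<in> {1..k}. i \<noteq> j \<longrightarrow>
              (g i <#\<^bsub>G\<^esub> E) \<inter> (g j <#\<^bsub>G\<^esub> E) = {}))"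

lemma wsp_iff: "weak_star_powers G \<longleftrightarrow> (\<forall>f \<in> carrier G - {\<one>\<^bsub>G\<^esub>}. \<forall>k::nat. k \<ge> 1 \<longrightarrow> WS G f k)"
  unfolding weak_star_powers_def WS_def by simp

lemma enat_nd: assumes "(2::enat) \<le> (i0 - 1) * (i1 - 1)"
  shows "(2 \<le> i0 \<and> 3 \<le> i1) \<or> (3 \<le> i0 \<and> 2 \<le> i1)"
proof (cases i0)
  case (enat n)
  show ?thesis
  proof (cases i1)
    case (enat m)
    have h: "2 \<le> (n - 1) * (m - 1)" using assms \<open>i0 = enat n\<close> enat
      by (simp add: one_enat_def numeral_eq_enat)
    have "n \<ge> 2" using h by (cases "n \<le> 1") auto
    moreover have "m \<ge> 2" using h by (cases "m \<le> 1") auto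
    moreover have "n \<ge> 3 \<or> m \<ge> 3"
    proof (rule ccontr)
      assume "\<not> (n \<ge> 3 \<or> m \<ge> 3)"
      then have "n - 1 \<le> 1" "m - 1 \<le> 1" by auto
      then have "(n - 1) * (m - 1) \<le> 1 * 1" using mult_le_mono by blast
      then show False using h by simp
    qed
    ultimately show ?thesis using \<open>i0 = enat n\<close> enat by (auto simp: numeral_eq_enat)
  next
    case infinity
    have "n \<ge> 2" proof (rule ccontr)
      assume "\<not> n \<ge> 2" then have "i0 - 1 = 0" using \<open>i0 = enat n\<close> by (simp add: one_enat_def zero_enat_def)
      then show False using assms by simp
    qed
    then show ?thesis using \<open>i0 = enat n\<close> infinity by (auto simp: numeral_eq_enat)
  qed
next
  case infinity
  show ?thesis
  proof (cases i1)
    case (enat m)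
    have "m \<ge> 2" proof (rule ccontr)
      assume "\<not> m \<ge> 2" then have "i1 - 1 = 0" using enat by (simp add: one_enat_def zero_enat_def)
      then show False using assms by simp
    qed
    then show ?thesis using enat infinity by (auto simp: numeral_eq_enat)
  next
    case infinity
    then show ?thesis using \<open>i0 = \<infinity>\<close> by simp
  qed
qed

context amalg begin

lemma idx_avoid:
  assumes n: "enat n \<le> subgroup_index G K H" and F: "finite F" and cF: "card F < n"
  shows "\<exists>a\<in>K. a <# H \<notin> F"
proof (rule ccontr)
  assume "\<not> ?thesis"
  then have sub: "{a <# H | a. a \<in> K} \<subseteq> F" by auto
  then have fin: "finite {a <# H | a. a \<in> K}" using F finite_subset by blast
  have "card {a <# H | a. a \<in> K} \<le> card F" using sub F card_mono by blast
  then show False using n cF fin unfolding subgroup_index_def Let_def by simp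
qed

lemma coset_self: assumes a: "a \<in> H" shows "a <# H = H"
proof
  show "a <# H \<subseteq> H" unfolding l_coset_def using subgroup.m_closed[OF sgH a] by auto
  show "H \<subseteq> a <# H"
  proof
    fix h assume h: "h \<in> H"
    have c: "a \<in> carrier G" "h \<in> carrier G" using a h Hc by auto
    have "inv a \<otimes> h \<in> H" using subgroup.m_closed[OF sgH subgroup.m_inv_closed[OF sgH a] h] .
    moreover have "h = a \<otimes> (inv a \<otimes> h)" using c by (simp flip: m_assoc)
    ultimately show "h \<in> a <# H" unfolding lcoset_mem by blast
  qed
qed

lemma idx2: assumes "2 \<le> subgroup_index G K H" shows "\<exists>a\<in>K. a \<notin> H"
proof -
  have "enat 2 \<le> subgroup_index G K H" using assms by (simp add: numeral_eq_enat)
  from idx_avoid[OF this, of "{H}"] obtain a where "a \<in> K" "a <# H \<noteq> H" by auto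
  then show ?thesis using coset_self by blast
qed

lemma idx3: assumes "3 \<le> subgroup_index G K H" and x: "x \<in> K" and K: "K \<subseteq> carrier G"
  shows "\<exists>a\<in>K. a \<notin> H \<and> inv x \<otimes> a \<notin> H"
proof -
  have "enat 3 \<le> subgroup_index G K H" using assms by (simp add: numeral_eq_enat)
  moreover have "card {H, x <# H} < 3" by (rule le_less_trans[OF card_insert_le_m1]) auto
  ultimately obtain a where a: "a \<in> K" "a <# H \<noteq> H" "a <# H \<noteq> x <# H"
    using idx_avoid[of 3 K "{H, x <# H}"] by auto
  have xc: "x \<in> carrier G" "a \<in> carrier G" using x a K by auto
  have "inv x \<otimes> a \<notin> H"
  proof
    assume h: "inv x \<otimes> a \<in> H"
    have "x <# ((inv x \<otimes> a) <# H) = (x \<otimes> (inv x \<otimes> a)) <# H"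
      using lcos_m_assoc[OF Hc xc(1)] xc by simp
    also have "x \<otimes> (inv x \<otimes> a) = a" using xc by (simp flip: m_assoc)
    finally show False using coset_self[OF h] a by simp
  qed
  then show ?thesis using a coset_self by blast
qed

lemma ws_intro:
  assumes D: "D \<subseteq> carrier G" and fD: "(f <# D) \<inter> D = {}" and c: "c \<in> carrier G"
    and Lc: "L \<subseteq> carrier G" and comp: "carrier G - D \<subseteq> c <# L"
    and gc: "\<forall>i::nat. g i \<in> carrier G" and gd: "\<forall>i j. i \<noteq> j \<longrightarrow> (g i <# L) \<inter> (g j <# L) = {}"
  shows "WS G f k"
proof -
  define g' where "g' i = g i \<otimes> inv c" for i
  have sub: "g' i <# (carrier G - D) \<subseteq> g i <# L" for i
  proof
    fix x assume "x \<in> g' i <# (carrier G - D)"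
    then obtain e where e: "e \<in> carrier G - D" "x = g' i \<otimes> e" unfolding lcoset_mem by blast
    have "e \<in> c <# L" using comp e(1) by blast
    then obtain l where l: "l \<in> L" "e = c \<otimes> l" unfolding lcoset_mem by blast
    have lc: "l \<in> carrier G" "g i \<in> carrier G" using l(1) Lc gc by auto
    have "x = (g i \<otimes> inv c) \<otimes> (c \<otimes> l)" using e(2) l(2) unfolding g'_def by simp
    also have "\<dots> = g i \<otimes> l" using lc c by (simp add: m_assoc)
    finally have "x = g i \<otimes> l" .
    then show "x \<in> g i <# L" using l unfolding lcoset_mem by blast
  qed
  have "D \<union> (carrier G - D) = carrier G" "D \<inter> (carrier G - D) = {}" using D by auto
  moreover have "\<forall>i \<in> {1..k}. g' i \<in> carrier G" using gc c g'_def by auto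
  moreover have "\<forall>i \<in> {1..k}. \<forall>j \<in> {1..k}. i \<noteq> j \<longrightarrow>
              (g' i <# (carrier G - D)) \<inter> (g' j <# (carrier G - D)) = {}"
  proof (intro ballI impI)
    fix i j :: nat assume "i \<noteq> j"
    then have "(g i <# L) \<inter> (g j <# L) = {}" using gd by blast
    then show "(g' i <# (carrier G - D)) \<inter> (g' j <# (carrier G - D)) = {}"
      using sub[of i] sub[of j] by blast
  qed
  ultimately show ?thesis unfolding WS_def using fD
    by (intro exI[of _ D] exI[of _ "carrier G - D"] exI[of _ g']) simp
qed

lemma lcos_c: "S \<subseteq> carrier G \<Longrightarrow> a \<in> carrier G \<Longrightarrow> a <# S \<subseteq> carrier G"
  unfolding l_coset_def by auto

lemma compl0: assumes a: "a \<in> carrier G" shows "carrier G - (a <# (H \<union> L1)) \<subseteq> a <# L0"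
proof
  fix e assume e: "e \<in> carrier G - (a <# (H \<union> L1))"
  have y: "inv a \<otimes> e \<in> carrier G" using a e by auto
  have ee: "e = a \<otimes> (inv a \<otimes> e)" using a e by (simp flip: m_assoc)
  have "inv a \<otimes> e \<notin> H \<union> L1"
  proof
    assume h: "inv a \<otimes> e \<in> H \<union> L1"
    have "e \<in> a <# (H \<union> L1)" unfolding lcoset_mem by (rule bexI[where P="\<lambda>s. e = a \<otimes> s", OF ee h])
    then show False using e by blast
  qed
  then have h: "inv a \<otimes> e \<in> L0" using cover[OF y] by blast
  show "e \<in> a <# L0" unfolding lcoset_mem by (rule bexI[where P="\<lambda>s. e = a \<otimes> s", OF ee h])
qed

lemma compl1: assumes a: "a \<in> carrier G" shows "carrier G - (a <# (H \<union> L0)) \<subseteq> a <# L1"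
proof
  fix e assume e: "e \<in> carrier G - (a <# (H \<union> L0))"
  have y: "inv a \<otimes> e \<in> carrier G" using a e by auto
  have ee: "e = a \<otimes> (inv a \<otimes> e)" using a e by (simp flip: m_assoc)
  have "inv a \<otimes> e \<notin> H \<union> L0"
  proof
    assume h: "inv a \<otimes> e \<in> H \<union> L0"
    have "e \<in> a <# (H \<union> L0)" unfolding lcoset_mem by (rule bexI[where P="\<lambda>s. e = a \<otimes> s", OF ee h])
    then show False using e by blast
  qed
  then have h: "inv a \<otimes> e \<in> L1" using cover[OF y] by blast
  show "e \<in> a <# L1" unfolding lcoset_mem by (rule bexI[where P="\<lambda>s. e = a \<otimes> s", OF ee h])
qed

end


lemma lcoset_memE: "x \<in> a <#\<^bsub>G\<^esub> S \<Longrightarrow> (\<And>s. s \<in> S \<Longrightarrow> x = a \<otimes>\<^bsub>G\<^esub> s \<Longrightarrow> P) \<Longrightarrow> P"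
  unfolding lcoset_mem by blast

context amalg begin

lemma trans_L0:
  assumes two0: "\<exists>a\<in>G0. a \<notin> H" and two1: "\<exists>b\<in>G1. b \<notin> H"
    and three: "(\<forall>x\<in>G0. \<exists>a\<in>G0. a \<notin> H \<and> inv x \<otimes> a \<notin> H) \<or> (\<forall>x\<in>G1. \<exists>b\<in>G1. b \<notin> H \<and> inv x \<otimes> b \<notin> H)"
  shows "\<exists>g. (\<forall>i::nat. g i \<in> carrier G) \<and> (\<forall>i j. i \<noteq> j \<longrightarrow> (g i <# L0) \<inter> (g j <# L0) = {})"
proof -
  obtain a b where a: "a \<in> G0" "a \<notin> H" and b: "b \<in> G1" "b \<notin> H" using two0 two1 by blast
  have "(\<exists>b'\<in>G1. b' \<notin> H \<and> inv b \<otimes> b' \<notin> H) \<or> (\<exists>a'\<in>G0. a' \<notin> H \<and> inv a \<otimes> a' \<notin> H)"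
    using three a b by blast
  then show ?thesis using translates_L0[OF a b] by blast
qed

lemma trans_L1:
  assumes two0: "\<exists>a\<in>G0. a \<notin> H" and two1: "\<exists>b\<in>G1. b \<notin> H"
    and three: "(\<forall>x\<in>G0. \<exists>a\<in>G0. a \<notin> H \<and> inv x \<otimes> a \<notin> H) \<or> (\<forall>x\<in>G1. \<exists>b\<in>G1. b \<notin> H \<and> inv x \<otimes> b \<notin> H)"
  shows "\<exists>g. (\<forall>i::nat. g i \<in> carrier G) \<and> (\<forall>i j. i \<noteq> j \<longrightarrow> (g i <# L1) \<inter> (g j <# L1) = {})"
proof -
  interpret sw: amalg G G1 G0 H by (rule swap)
  show ?thesis using sw.trans_L0 two0 two1 three by blast
qed

lemma caseL:
  assumes r: "R ws" and ne: "ws \<noteq> []" and l: "last ws \<in> G1"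
    and two0: "\<exists>a\<in>G0. a \<notin> H" and two1: "\<exists>b\<in>G1. b \<notin> H"
    and three: "(\<forall>x\<in>G0. \<exists>a\<in>G0. a \<notin> H \<and> inv x \<otimes> a \<notin> H) \<or> (\<forall>x\<in>G1. \<exists>b\<in>G1. b \<notin> H \<and> inv x \<otimes> b \<notin> H)"
  shows "WS G (list_prod G ws) k"
proof -
  obtain g0 where g0: "\<forall>i::nat. g0 i \<in> carrier G" "\<forall>i j. i \<noteq> j \<longrightarrow> (g0 i <# L0) \<inter> (g0 j <# L0) = {}"
    using trans_L0[OF two0 two1 three] by blast
  obtain g1 where g1: "\<forall>i::nat. g1 i \<in> carrier G" "\<forall>i j. i \<noteq> j \<longrightarrow> (g1 i <# L1) \<inter> (g1 j <# L1) = {}"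
    using trans_L1[OF two0 two1 three] by blast
  define f where "f = list_prod G ws"
  have wsc: "set ws \<subseteq> carrier G" using letters_c[OF r] .
  have fc: "f \<in> carrier G" unfolding f_def using list_prod_c[OF wsc] .
  have HL0c: "H \<union> L0 \<subseteq> carrier G" "H \<union> L1 \<subseteq> carrier G" using Hc L0c L1c by auto
  have shape0: "WS G f k" if a: "a \<in> G0" "a \<notin> H"
     and key: "\<And>y. y \<in> H \<union> L1 \<Longrightarrow> f \<otimes> (a \<otimes> y) \<notin> a <# (H \<union> L1)" for a
  proof -
    have ac: "a \<in> carrier G" using a G0c by auto
    show ?thesis
    proof (rule ws_intro[OF lcos_c[OF HL0c(2) ac] _ ac L0c compl0[OF ac] g0])
      show "(f <# (a <# (H \<union> L1))) \<inter> (a <# (H \<union> L1)) = {}"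
      proof (rule ccontr)
        assume "(f <# (a <# (H \<union> L1))) \<inter> (a <# (H \<union> L1)) \<noteq> {}"
        then obtain x where x1: "x \<in> f <# (a <# (H \<union> L1))" and x2: "x \<in> a <# (H \<union> L1)" by blast
        from x1 obtain d where d: "d \<in> a <# (H \<union> L1)" "x = f \<otimes> d" by (rule lcoset_memE)
        from d(1) obtain y where y: "y \<in> H \<union> L1" "d = a \<otimes> y" by (rule lcoset_memE)
        show False using key[OF y(1)] x2 d(2) y(2) by simp
      qed
    qed
  qed
  have shape1: "WS G f k" if b: "b \<in> G1" "b \<notin> H"
     and key: "\<And>y. y \<in> H \<union> L0 \<Longrightarrow> f \<otimes> (b \<otimes> y) \<notin> b <# (H \<union> L0)" for b
  proof -
    have bc: "b \<in> carrier G" using b G1c by auto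
    show ?thesis
    proof (rule ws_intro[OF lcos_c[OF HL0c(1) bc] _ bc L1c compl1[OF bc] g1])
      show "(f <# (b <# (H \<union> L0))) \<inter> (b <# (H \<union> L0)) = {}"
      proof (rule ccontr)
        assume "(f <# (b <# (H \<union> L0))) \<inter> (b <# (H \<union> L0)) \<noteq> {}"
        then obtain x where x1: "x \<in> f <# (b <# (H \<union> L0))" and x2: "x \<in> b <# (H \<union> L0)" by blast
        from x1 obtain d where d: "d \<in> b <# (H \<union> L0)" "x = f \<otimes> d" by (rule lcoset_memE)
        from d(1) obtain y where y: "y \<in> H \<union> L0" "d = b \<otimes> y" by (rule lcoset_memE)
        show False using key[OF y(1)] x2 d(2) y(2) by simp
      qed
    qed
  qed
  have D0L: "a <# (H \<union> L1) \<subseteq> L0" if "a \<in> G0" "a \<notin> H" for a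
    using prepend0[OF that] unfolding l_coset_def by auto
  have D1L: "b <# (H \<union> L0) \<subseteq> L1" if "b \<in> G1" "b \<notin> H" for b
    using prepend1[OF that] unfolding l_coset_def by auto
  have "WS G f k"
  proof (cases "hd ws \<in> G1")
    case True
    obtain a where a: "a \<in> G0" "a \<notin> H" using two0 by blast
    show ?thesis
    proof (rule shape0[OF a])
      fix y assume y: "y \<in> H \<union> L1"
      have "a \<otimes> y \<in> L0" using prepend0[OF a] y by blast
      then obtain us where us: "f \<otimes> (a \<otimes> y) = list_prod G us" "us \<noteq> []" "R us" "hd us = hd ws"
        using app_L0[OF r ne l] unfolding f_def by blast
      have "f \<otimes> (a \<otimes> y) \<in> L1" unfolding mem_L1 using us True by auto
      then show "f \<otimes> (a \<otimes> y) \<notin> a <# (H \<union> L1)" using D0L[OF a] L0_L1 by blast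
    qed
  next
    case False
    then have h0: "hd ws \<in> G0" using hd_either[OF r ne] by auto
    obtain t where t: "tl ws \<noteq> []" "R (tl ws)" "hd (tl ws) \<in> G1" "last (tl ws) = last ws"
      using tl_word[OF r ne h0 l] by blast
    from three show ?thesis
    proof
      assume th: "\<forall>x\<in>G0. \<exists>a\<in>G0. a \<notin> H \<and> inv x \<otimes> a \<notin> H"
      obtain a where a: "a \<in> G0" "a \<notin> H" "inv (hd ws) \<otimes> a \<notin> H" using th h0 by blast
      have ac: "a \<in> carrier G" and hc: "hd ws \<in> carrier G" using a h0 G0c by auto
      show ?thesis
      proof (rule shape0[OF a(1,2)])
        fix y assume y: "y \<in> H \<union> L1"
        have d: "a \<otimes> y \<in> L0" using prepend0[OF a(1,2)] y by blast
        obtain us where us: "list_prod G (tl ws) \<otimes> (a \<otimes> y) = list_prod G us" "us \<noteq> []" "R us"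
            "hd us = hd (tl ws)"
          using app_L0[OF t(2,1) _ d] t(4) l by auto
        have uL: "list_prod G (tl ws) \<otimes> (a \<otimes> y) \<in> L1" unfolding mem_L1 using us t(3) by auto
        have uc: "list_prod G (tl ws) \<otimes> (a \<otimes> y) \<in> carrier G" using uL L1c by auto
        have ws': "ws = hd ws # tl ws" using ne by simp
        have tc: "set (tl ws) \<subseteq> carrier G" using wsc ws' by (metis list.set_sel(2) ne subsetD subsetI)
        have fe: "f \<otimes> (a \<otimes> y) = hd ws \<otimes> (list_prod G (tl ws) \<otimes> (a \<otimes> y))"
          unfolding f_def using ws' hc list_prod_c[OF tc] ac y HL0c
          by (metis list_prod_Cons m_assoc d L0c subsetD)
        show "f \<otimes> (a \<otimes> y) \<notin> a <# (H \<union> L1)"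
        proof
          assume "f \<otimes> (a \<otimes> y) \<in> a <# (H \<union> L1)"
          then obtain y' where y': "y' \<in> H \<union> L1" "f \<otimes> (a \<otimes> y) = a \<otimes> y'" unfolding lcoset_mem by blast
          have y'c: "y' \<in> carrier G" using y'(1) HL0c by auto
          have "inv a \<otimes> hd ws \<in> G0"
            using subgroup.m_closed[OF sg0 subgroup.m_inv_closed[OF sg0 a(1)] h0] .
          moreover have "inv a \<otimes> hd ws \<notin> H"
          proof
            assume "inv a \<otimes> hd ws \<in> H"
            then have "inv (inv a \<otimes> hd ws) \<in> H" using subgroup.m_inv_closed[OF sgH] by blast
            moreover have "inv (inv a \<otimes> hd ws) = inv (hd ws) \<otimes> a" using ac hc by (simp add: inv_mult_group)
            ultimately show False using a(3) by simp
          qed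
          ultimately have "(inv a \<otimes> hd ws) \<otimes> (list_prod G (tl ws) \<otimes> (a \<otimes> y)) \<in> L0"
            using prepend0 uL by blast
          moreover have "(inv a \<otimes> hd ws) \<otimes> (list_prod G (tl ws) \<otimes> (a \<otimes> y)) = y'"
          proof -
            have "(inv a \<otimes> hd ws) \<otimes> (list_prod G (tl ws) \<otimes> (a \<otimes> y)) = inv a \<otimes> (f \<otimes> (a \<otimes> y))"
              using fe ac hc uc by (simp add: m_assoc)
            also have "\<dots> = y'" using y'(2) ac y'c by simp
            finally show ?thesis .
          qed
          ultimately show False using y'(1) H_L0 L0_L1 by blast
        qed
      qed
    next
      assume th: "\<forall>x\<in>G1. \<exists>b\<in>G1. b \<notin> H \<and> inv x \<otimes> b \<notin> H"
      have lc: "last ws \<in> carrier G" using l G1c by auto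
      obtain b where b: "b \<in> G1" "b \<notin> H" "inv (inv (last ws)) \<otimes> b \<notin> H"
        using th subgroup.m_inv_closed[OF sg1 l] by blast
      have bc: "b \<in> carrier G" using b G1c by auto
      have xb: "last ws \<otimes> b \<in> G1" "last ws \<otimes> b \<notin> H"
        using subgroup.m_closed[OF sg1 l b(1)] b(3) lc by auto
      obtain us where us: "ws = us @ [last ws]" "us \<noteq> []" "R us" "hd us = hd ws" "last us \<in> G0"
        using butlast_word[OF r ne h0 l] by blast
      have usc: "set us \<subseteq> carrier G" using letters_c[OF us(3)] .
      show ?thesis
      proof (rule shape1[OF b(1,2)])
        fix y assume y: "y \<in> H \<union> L0"
        have yc: "y \<in> carrier G" using y HL0c by auto
        have z: "(last ws \<otimes> b) \<otimes> y \<in> L1" using prepend1[OF xb] y by blast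
        have fe: "f \<otimes> (b \<otimes> y) = list_prod G us \<otimes> ((last ws \<otimes> b) \<otimes> y)"
        proof -
          have "f = list_prod G us \<otimes> last ws"
            unfolding f_def using list_prod_append[OF usc, of "[last ws]"] lc us(1) by (metis empty_subsetI insert_subset list.set(1) list.set(2) list_prod_Cons list_prod_Nil r_one)
          then show ?thesis using list_prod_c[OF usc] lc bc yc by (simp add: m_assoc)
        qed
        obtain vs where vs: "list_prod G us \<otimes> ((last ws \<otimes> b) \<otimes> y) = list_prod G vs" "vs \<noteq> []" "R vs"
            "hd vs = hd us"
          using app_L1[OF us(3,2,5) z] by blast
        have "f \<otimes> (b \<otimes> y) \<in> L0" unfolding mem_L0 fe using vs us(4) h0 by auto
        then show "f \<otimes> (b \<otimes> y) \<notin> b <# (H \<union> L0)" using D1L[OF b(1,2)] L0_L1 by blast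
      qed
    qed
  qed
  then show ?thesis unfolding f_def .
qed

end


context amalg begin

lemma main_notH:
  assumes f: "f \<in> carrier G" "f \<notin> H"
    and two0: "\<exists>a\<in>G0. a \<notin> H" and two1: "\<exists>b\<in>G1. b \<notin> H"
    and three: "(\<forall>x\<in>G0. \<exists>a\<in>G0. a \<notin> H \<and> inv x \<otimes> a \<notin> H) \<or> (\<forall>x\<in>G1. \<exists>b\<in>G1. b \<notin> H \<and> inv x \<otimes> b \<notin> H)"
  shows "WS G f k"
proof -
  have "f \<in> L0 \<or> f \<in> L1" using cover[OF f(1)] f(2) by blast
  then obtain ws where ws: "f = list_prod G ws" "ws \<noteq> []" "R ws" using mem_L0 mem_L1 by blast
  show ?thesis
  proof (cases "last ws \<in> G1")
    case True
    show ?thesis unfolding ws(1) by (rule caseL[OF ws(3,2) True two0 two1 three])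
  next
    case False
    then have l0: "last ws \<in> G0" using last_either[OF ws(3,2)] by blast
    interpret sw: amalg G G1 G0 H by (rule swap)
    have r': "reduced_word G1 G0 H ws" using ws(3) by (simp add: reduced_word_sym)
    have three': "(\<forall>x\<in>G1. \<exists>b\<in>G1. b \<notin> H \<and> inv x \<otimes> b \<notin> H) \<or> (\<forall>x\<in>G0. \<exists>a\<in>G0. a \<notin> H \<and> inv x \<otimes> a \<notin> H)"
      using three by blast
    show ?thesis unfolding ws(1) by (rule sw.caseL[OF r' ws(2) l0 two1 two0 three'])
  qed
qed

lemma coset_shift: assumes S: "S \<subseteq> carrier G" and a: "a \<in> carrier G" and g: "g \<in> carrier G"
  shows "(a \<otimes> inv g) <# (g <# S) = a <# S"
proof -
  have "(a \<otimes> inv g) <# (g <# S) = ((a \<otimes> inv g) \<otimes> g) <# S" using lcos_m_assoc[OF S] a g by simp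
  also have "(a \<otimes> inv g) \<otimes> g = a" using a g by (simp add: m_assoc)
  finally show ?thesis .
qed

lemma ws_conj:
  assumes g: "g \<in> carrier G" and f: "f \<in> carrier G" and w: "WS G (inv g \<otimes> f \<otimes> g) k"
  shows "WS G f k"
proof -
  obtain D' E' h where h: "D' \<union> E' = carrier G" "D' \<inter> E' = {}"
    "((inv g \<otimes> f \<otimes> g) <# D') \<inter> D' = {}" "\<forall>i \<in> {1..k}. h i \<in> carrier G"
    "\<forall>i \<in> {1..k}. \<forall>j \<in> {1..k}. i \<noteq> j \<longrightarrow> (h i <# E') \<inter> (h j <# E') = {}"
    using w unfolding WS_def by blast
  have Dc: "D' \<subseteq> carrier G" "E' \<subseteq> carrier G" using h(1) by auto
  define h' where "h' i = h i \<otimes> inv g" for i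
  have 1: "(g <# D') \<union> (g <# E') = carrier G"
  proof
    show "(g <# D') \<union> (g <# E') \<subseteq> carrier G" using lcos_c[OF Dc(1) g] lcos_c[OF Dc(2) g] by blast
    show "carrier G \<subseteq> (g <# D') \<union> (g <# E')"
    proof
      fix x assume x: "x \<in> carrier G"
      have xe: "x = g \<otimes> (inv g \<otimes> x)" using g x by (simp flip: m_assoc)
      have "inv g \<otimes> x \<in> D' \<union> E'" using h(1) g x by auto
      then show "x \<in> (g <# D') \<union> (g <# E')"
        unfolding lcoset_mem Un_iff using xe by (metis)
    qed
  qed
  have 2: "(g <# D') \<inter> (g <# E') = {}"
  proof (rule ccontr)
    assume "(g <# D') \<inter> (g <# E') \<noteq> {}"
    then obtain x where "x \<in> g <# D'" "x \<in> g <# E'" by blast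
    then obtain d e where d: "d \<in> D'" "x = g \<otimes> d" and e: "e \<in> E'" "x = g \<otimes> e"
      by (metis lcoset_memE)
    have "d = e" using d e Dc g by (metis l_cancel subsetD)
    then show False using h(2) d e by blast
  qed
  have 3: "(f <# (g <# D')) \<inter> (g <# D') = {}"
  proof (rule ccontr)
    assume "(f <# (g <# D')) \<inter> (g <# D') \<noteq> {}"
    then obtain x where x1: "x \<in> f <# (g <# D')" and x2: "x \<in> g <# D'" by blast
    from x1 obtain d where d: "d \<in> g <# D'" "x = f \<otimes> d" by (rule lcoset_memE)
    from d(1) obtain d1 where d1: "d1 \<in> D'" "d = g \<otimes> d1" by (rule lcoset_memE)
    from x2 obtain d2 where d2: "d2 \<in> D'" "x = g \<otimes> d2" by (rule lcoset_memE)
    have c: "d1 \<in> carrier G" "d2 \<in> carrier G" using d1 d2 Dc by auto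
    have "(inv g \<otimes> f \<otimes> g) \<otimes> d1 = inv g \<otimes> (f \<otimes> (g \<otimes> d1))" using g f c by (simp add: m_assoc)
    also have "f \<otimes> (g \<otimes> d1) = g \<otimes> d2" using d d1 d2 by simp
    also have "inv g \<otimes> (g \<otimes> d2) = d2" using g c by simp
    finally have "d2 \<in> (inv g \<otimes> f \<otimes> g) <# D'" unfolding lcoset_mem using d1(1) by metis
    then show False using h(3) d2(1) by blast
  qed
  have 4: "\<forall>i \<in> {1..k}. h' i \<in> carrier G" using h(4) g h'_def by auto
  have 5: "\<forall>i \<in> {1..k}. \<forall>j \<in> {1..k}. i \<noteq> j \<longrightarrow> (h' i <# (g <# E')) \<inter> (h' j <# (g <# E')) = {}"
  proof (intro ballI impI)
    fix i j assume ij: "i \<in> {1..k}" "j \<in> {1..k}" "i \<noteq> j"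
    have "h' i <# (g <# E') = h i <# E'" unfolding h'_def using coset_shift[OF Dc(2) _ g] h(4) ij by simp
    moreover have "h' j <# (g <# E') = h j <# E'" unfolding h'_def using coset_shift[OF Dc(2) _ g] h(4) ij by simp
    ultimately show "(h' i <# (g <# E')) \<inter> (h' j <# (g <# E')) = {}" using h(5) ij by simp
  qed
  show ?thesis unfolding WS_def using 1 2 3 4 5
    by (intro exI[of _ "g <# D'"] exI[of _ "g <# E'"] exI[of _ h']) simp
qed

end

theorem proposition5p5:
  fixes G :: "('a, 'b) monoid_scheme" and G0 G1 H :: "'a set"
  assumes "amalgamated_product G G0 G1 H"
    and "nondegenerate_amalgam G G0 G1 H"
    and "amalgam_kernel G H = {\<one>\<^bsub>G\<^esub>}"
  shows "weak_star_powers G"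
proof -
  have grp: "group G" using assms(1) unfolding amalgamated_product_def by blast
  interpret amalg G G0 G1 H by (rule amalg.intro[OF grp]) (unfold_locales, rule assms(1))
  have nd: "(2 \<le> subgroup_index G G0 H \<and> 3 \<le> subgroup_index G G1 H) \<or>
            (3 \<le> subgroup_index G G0 H \<and> 2 \<le> subgroup_index G G1 H)"
    using enat_nd assms(2) unfolding nondegenerate_amalgam_def by blast
  have le: "(2::enat) \<le> 3" by simp
  have i0: "2 \<le> subgroup_index G G0 H" and i1: "2 \<le> subgroup_index G G1 H"
    using nd order.trans[OF le] by blast+
  have two0: "\<exists>a\<in>G0. a \<notin> H" using idx2[OF i0] .
  have two1: "\<exists>b\<in>G1. b \<notin> H" using idx2[OF i1] .
  have three: "(\<forall>x\<in>G0. \<exists>a\<in>G0. a \<notin> H \<and> inv\<^bsub>G\<^esub> x \<otimes>\<^bsub>G\<^esub> a \<notin> H) \<or> (\<forall>x\<in>G1. \<exists>b\<in>G1. b \<notin> H \<and> inv\<^bsub>G\<^esub> x \<otimes>\<^bsub>G\<^esub> b \<notin> H)"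
    using nd idx3[of G0 _] idx3[of G1 _] G0c G1c by blast
  show ?thesis unfolding wsp_iff
  proof (intro ballI allI impI)
    fix f k assume f: "f \<in> carrier G - {\<one>\<^bsub>G\<^esub>}" and k: "(1::nat) \<le> k"
    show "WS G f k"
    proof (cases "f \<in> H")
      case False
      then show ?thesis using main_notH f two0 two1 three by blast
    next
      case True
      have "f \<notin> amalgam_kernel G H" using assms(3) f by blast
      then obtain g where g: "g \<in> carrier G" "f \<notin> (g <#\<^bsub>G\<^esub> H) #>\<^bsub>G\<^esub> inv\<^bsub>G\<^esub> g"
        unfolding amalgam_kernel_def by blast
      have fc: "f \<in> carrier G" using f by blast
      have f'c: "inv\<^bsub>G\<^esub> g \<otimes>\<^bsub>G\<^esub> f \<otimes>\<^bsub>G\<^esub> g \<in> carrier G" using g fc by simp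
      have "inv\<^bsub>G\<^esub> g \<otimes>\<^bsub>G\<^esub> f \<otimes>\<^bsub>G\<^esub> g \<notin> H"
      proof
        assume hH: "inv\<^bsub>G\<^esub> g \<otimes>\<^bsub>G\<^esub> f \<otimes>\<^bsub>G\<^esub> g \<in> H"
        have "g \<otimes>\<^bsub>G\<^esub> (inv\<^bsub>G\<^esub> g \<otimes>\<^bsub>G\<^esub> f \<otimes>\<^bsub>G\<^esub> g) \<in> g <#\<^bsub>G\<^esub> H" unfolding lcoset_mem using hH by blast
        then have "(g \<otimes>\<^bsub>G\<^esub> (inv\<^bsub>G\<^esub> g \<otimes>\<^bsub>G\<^esub> f \<otimes>\<^bsub>G\<^esub> g)) \<otimes>\<^bsub>G\<^esub> inv\<^bsub>G\<^esub> g \<in> (g <#\<^bsub>G\<^esub> H) #>\<^bsub>G\<^esub> inv\<^bsub>G\<^esub> g"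
          unfolding r_coset_def by blast
        moreover have "(g \<otimes>\<^bsub>G\<^esub> (inv\<^bsub>G\<^esub> g \<otimes>\<^bsub>G\<^esub> f \<otimes>\<^bsub>G\<^esub> g)) \<otimes>\<^bsub>G\<^esub> inv\<^bsub>G\<^esub> g = f" using g fc by (simp add: m_assoc) (simp flip: m_assoc)
        ultimately show False using g(2) by simp
      qed
      then have "WS G (inv\<^bsub>G\<^esub> g \<otimes>\<^bsub>G\<^esub> f \<otimes>\<^bsub>G\<^esub> g) k" using main_notH f'c two0 two1 three by blast
      then show ?thesis using ws_conj g(1) fc by blast
    qed
  qed
qed


end
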